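(* Let $\kappa_1\le\kappa_2$ be infinite regular cardinals and suppose a $(\kappa_1,\kappa_2)$-peculiar cut in ${}^\omega\omega$ exists. Then there are a $\sigma$-centered forcing notion $\mathbb Q$ of cardinality $\kappa_1$ and a family of $\kappa_2$ open dense subsets of $\mathbb Q$ such that no directed subset $G\subseteq\mathbb Q$ meets all of them. Consequently $\mathbf{MA}_{\kappa_2}(\sigma\text{-centered})$ fails, and $\mathfrak p\le\kappa_2$.
   Context: For $f,g\in{}^\omega\omega$: $f\le^*g$ iff $f(n)\le g(n)$ for all but finitely many $n$; $f<^*g$ iff $f(n)<g(n)$ for all but finitely many $n$. For infinite regular cardinals $\kappa_1,\kappa_2$, a $(\kappa_1,\kappa_2)$-peculiar cut in ${}^\omega\omega$ is a pair $(\langle f_i:i<\kappa_1\rangle,\langle f^\alpha:\alpha<\kappa_2\rangle)$ of sequences in ${}^\omega\omega$ such that: ($\alpha$) $f_j<^*f_i$ for $i<j<\kappa_1$; ($\beta$) $f^\alpha<^*f^\beta$ for $\alpha<\beta<\kappa_2$; ($\gamma$) $f^\alpha<^*f_i$ for all $i<\kappa_1$, $\alpha<\kappa_2$; ($\delta$) if $f\in{}^\omega\omega$ and $f\le^*f_i$ for all $i<\kappa_1$, then $f\le^*f^\alpha$ for some $\alpha<\kappa_2$; ($\varepsilon$) if $f\in{}^\omega\omega$ and $f^\alpha\le^*f$ for all $\alpha<\kappa_2$, then $f_i\le^*f$ for some $i<\kappa_1$. A forcing notion is $\sigma$-centered if it is a countable union of centered sets (sets any finitely many elements of which have a common upper bound).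 $\mathbf{MA}_\mu(\sigma\text{-centered})$ says: for every $\sigma$-centered forcing and every family of $\mu$ dense sets there is a directed set meeting all of them. $\mathfrak p$ is the least cardinality of a family $\mathcal B$ of infinite subsets of $\omega$ all of whose finite subfamilies have infinite intersection but with no infinite $A\subseteq\omega$ such that $A\setminus B$ is finite for all $B\in\mathcal B$. *)

theory Defs
  imports Main
begin

definition ev_le :: "(nat \<Rightarrow> nat) \<Rightarrow> (nat \<Rightarrow> nat) \<Rightarrow> bool" where
  "ev_le f g \<longleftrightarrow> finite {n. \<not> f n \<le> g n}"

definition ev_less :: "(nat \<Rightarrow> nat) \<Rightarrow> (nat \<Rightarrow> nat) \<Rightarrow> bool" where
  "ev_less f g \<longleftrightarrow> finite {n. \<not> f n < g n}"

definition inf_regular_card :: "'a rel \<Rightarrow> bool" where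
  "inf_regular_card r \<longleftrightarrow> Card_order r \<and> infinite (Field r) \<and> regularCard r"

text \<open>A (kappa1,kappa2)-peculiar cut; the sequences are indexed by the fields of
  the cardinal orders r1, r2, ordered by their strict parts.\<close>
definition peculiar_cut ::
  "'a rel \<Rightarrow> 'b rel \<Rightarrow> ('a \<Rightarrow> nat \<Rightarrow> nat) \<Rightarrow> ('b \<Rightarrow> nat \<Rightarrow> nat) \<Rightarrow> bool" where
  "peculiar_cut r1 r2 fl fu \<longleftrightarrow>
     (\<forall>i\<in>Field r1. \<forall>j\<in>Field r1. (i, j) \<in> r1 \<and> i \<noteq> j \<longrightarrow> ev_less (fl j) (fl i)) \<and>
     (\<forall>\<alpha>\<in>Field r2. \<forall>\<beta>\<in>Field r2. (\<alpha>, \<beta>) \<in> r2 \<and> \<alpha> \<noteq> \<beta> \<longrightarrow> ev_less (fu \<alpha>) (fu \<beta>)) \<and>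
     (\<forall>i\<in>Field r1. \<forall>\<alpha>\<in>Field r2. ev_less (fu \<alpha>) (fl i)) \<and>
     (\<forall>f. (\<forall>i\<in>Field r1. ev_le f (fl i)) \<longrightarrow> (\<exists>\<alpha>\<in>Field r2. ev_le f (fu \<alpha>))) \<and>
     (\<forall>f. (\<forall>\<alpha>\<in>Field r2. ev_le (fu \<alpha>) f) \<longrightarrow> (\<exists>i\<in>Field r1. ev_le (fl i) f))"

text \<open>Forcing notions: a preorder le on Q; le p q means q is stronger than p
  (upper bounds are common extensions).\<close>
definition forcing_notion :: "'q set \<Rightarrow> ('q \<Rightarrow> 'q \<Rightarrow> bool) \<Rightarrow> bool" where
  "forcing_notion Q le \<longleftrightarrow> (\<forall>p\<in>Q. le p p) \<and>
     (\<forall>p\<in>Q. \<forall>q\<in>Q. \<forall>r\<in>Q. le p q \<and> le q r \<longrightarrow> le p r)"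

definition centered :: "'q set \<Rightarrow> ('q \<Rightarrow> 'q \<Rightarrow> bool) \<Rightarrow> 'q set \<Rightarrow> bool" where
  "centered Q le C \<longleftrightarrow> C \<subseteq> Q \<and>
     (\<forall>F. F \<subseteq> C \<and> finite F \<longrightarrow> (\<exists>q\<in>Q. \<forall>p\<in>F. le p q))"

definition sigma_centered :: "'q set \<Rightarrow> ('q \<Rightarrow> 'q \<Rightarrow> bool) \<Rightarrow> bool" where
  "sigma_centered Q le \<longleftrightarrow> forcing_notion Q le \<and>
     (\<exists>C :: nat \<Rightarrow> 'q set. Q = (\<Union>n. C n) \<and> (\<forall>n. centered Q le (C n)))"

definition dense_in :: "'q set \<Rightarrow> ('q \<Rightarrow> 'q \<Rightarrow> bool) \<Rightarrow> 'q set \<Rightarrow> bool" where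
  "dense_in Q le D \<longleftrightarrow> D \<subseteq> Q \<and> (\<forall>p\<in>Q. \<exists>q\<in>D. le p q)"

definition open_dense_in :: "'q set \<Rightarrow> ('q \<Rightarrow> 'q \<Rightarrow> bool) \<Rightarrow> 'q set \<Rightarrow> bool" where
  "open_dense_in Q le D \<longleftrightarrow> dense_in Q le D \<and>
     (\<forall>p\<in>D. \<forall>q\<in>Q. le p q \<longrightarrow> q \<in> D)"

definition directed_in :: "'q set \<Rightarrow> ('q \<Rightarrow> 'q \<Rightarrow> bool) \<Rightarrow> 'q set \<Rightarrow> bool" where
  "directed_in Q le G \<longleftrightarrow> G \<subseteq> Q \<and>
     (\<forall>p\<in>G. \<forall>q\<in>G. \<exists>r\<in>G. le p r \<and> le q r)"

text \<open>MA_mu(sigma-centered), where mu is given by a cardinal order r, restricted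
  to forcing notions whose underlying set lives in the type 'q (HOL cannot quantify
  over all types).\<close>
definition MA_sigma_centered :: "'b rel \<Rightarrow> 'q itself \<Rightarrow> bool" where
  "MA_sigma_centered r (T :: 'q itself) \<longleftrightarrow>
     (\<forall>(Q :: 'q set) le (D :: 'b \<Rightarrow> 'q set).
        sigma_centered Q le \<and> (\<forall>\<alpha>\<in>Field r. dense_in Q le (D \<alpha>)) \<longrightarrow>
        (\<exists>G. directed_in Q le G \<and> (\<forall>\<alpha>\<in>Field r. G \<inter> D \<alpha> \<noteq> {})))"

text \<open>Witness families for the pseudo-intersection number p: infinite subsets of nat
  with the strong finite intersection property and no infinite pseudo-intersection.
  p <= kappa iff such a family of cardinality <= kappa exists.\<close>
definition p_family :: "nat set set \<Rightarrow> bool" where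
  "p_family B \<longleftrightarrow> (\<forall>X\<in>B. infinite X) \<and>
     (\<forall>F. F \<subseteq> B \<and> finite F \<longrightarrow> infinite (\<Inter>F)) \<and>
     \<not> (\<exists>A. infinite A \<and> (\<forall>X\<in>B. finite (A - X)))"

end

theory Submission
  imports Defs "HOL-Library.Countable" "HOL-Library.Nat_Bijection"
begin


lemma ev_le_trans: "ev_le f g \<Longrightarrow> ev_le g h \<Longrightarrow> ev_le f h"
  unfolding ev_le_def
  by (rule finite_subset[of _ "{n. \<not> f n \<le> g n} \<union> {n. \<not> g n \<le> h n}"]) auto

lemma ev_less_le: "ev_less f g \<Longrightarrow> ev_le f g"
  unfolding ev_le_def ev_less_def
  by (erule finite_subset[rotated]) auto

lemma ev_le_refl: "ev_le f f" unfolding ev_le_def by simp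

lemma finite_bound: "finite (S::nat set) \<Longrightarrow> \<exists>N. \<forall>n\<ge>N. n \<notin> S"
  by (metis finite_nat_set_iff_bounded not_less)

lemma ev_le_E: "ev_le f g \<Longrightarrow> \<exists>N. \<forall>n\<ge>N. f n \<le> g n"
  unfolding ev_le_def by (drule finite_bound) auto

lemma ev_less_E: "ev_less f g \<Longrightarrow> \<exists>N. \<forall>n\<ge>N. f n < g n"
  unfolding ev_less_def by (drule finite_bound) auto

definition le0 :: "('a \<Rightarrow> nat \<Rightarrow> nat) \<Rightarrow> (nat list \<times> 'a) \<Rightarrow> (nat list \<times> 'a) \<Rightarrow> bool" where
  "le0 fl p q \<longleftrightarrow> length (fst p) \<le> length (fst q) \<and> (\<forall>n<length (fst p). fst q ! n = fst p ! n) \<and>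
     (\<forall>n. length (fst p) \<le> n \<and> n < length (fst q) \<longrightarrow> fst q ! n \<le> fl (snd p) n) \<and>
     (\<forall>n\<ge>length (fst q). fl (snd q) n \<le> fl (snd p) n)"

lemma le0_refl: "le0 fl p p" unfolding le0_def by auto

lemma le0_trans:
  assumes A: "le0 fl p q" and B: "le0 fl q r" shows "le0 fl p r"
proof -
  obtain s i t j u k where e: "p = (s, i)" "q = (t, j)" "r = (u, k)" by (cases p; cases q; cases r) auto
  note A' = A[unfolded le0_def e fst_conv snd_conv]
  note B' = B[unfolded le0_def e fst_conv snd_conv]
  have 1: "length s \<le> length u" using A' B' by linarith
  have 2: "\<forall>n<length s. u ! n = s ! n"
  proof (intro allI impI)
    fix n assume "n < length s"
    then have "n < length t" using A' by linarith
    then show "u ! n = s ! n" using A' B' \<open>n < length s\<close> by auto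
  qed
  have 3: "\<forall>n. length s \<le> n \<and> n < length u \<longrightarrow> u ! n \<le> fl i n"
  proof (intro allI impI)
    fix n assume n: "length s \<le> n \<and> n < length u"
    show "u ! n \<le> fl i n"
    proof (cases "n < length t")
      case True then show ?thesis using A' B' n by auto
    next
      case False
      then have "u ! n \<le> fl j n" "fl j n \<le> fl i n" using A' B' n by auto
      then show ?thesis by linarith
    qed
  qed
  have 4: "\<forall>n\<ge>length u. fl k n \<le> fl i n"
  proof (intro allI impI)
    fix n assume n: "length u \<le> n"
    then have "fl k n \<le> fl j n" "fl j n \<le> fl i n" using A' B' by auto
    then show "fl k n \<le> fl i n" by linarith
  qed
  show ?thesis unfolding le0_def e fst_conv snd_conv using 1 2 3 4 by blast
qed

lemma le0_ext:
  assumes "\<forall>n\<ge>N. fl k n \<le> fl i n"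
  shows "le0 fl (s, i) (s @ replicate (N - length s) 0, k)"
  using assms unfolding le0_def by (auto simp: nth_append)

lemma le0_step: "le0 fl (t, k) (t @ [fl k (length t)], k)"
  unfolding le0_def apply (auto simp: nth_append)
  by (subgoal_tac "n = length t") auto

definition D0 :: "'a set \<Rightarrow> ('a \<Rightarrow> nat \<Rightarrow> nat) \<Rightarrow> ('b \<Rightarrow> nat \<Rightarrow> nat) \<Rightarrow> 'a \<Rightarrow> 'b \<Rightarrow> nat \<Rightarrow> (nat list \<times> 'a) set" where
  "D0 F1 fl fu i \<alpha> m = {(t, j). j \<in> F1 \<and> (\<forall>n\<ge>length t. fl j n \<le> fl i n) \<and>
      (\<exists>n. m \<le> n \<and> n < length t \<and> fu \<alpha> n < t ! n)}"

lemma D0_open: "p \<in> D0 F1 fl fu i \<alpha> m \<Longrightarrow> snd q \<in> F1 \<Longrightarrow> le0 fl p q \<Longrightarrow> q \<in> D0 F1 fl fu i \<alpha> m"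
  unfolding D0_def le0_def
  apply (cases p; cases q; simp)
  by (metis le_trans order.strict_trans2)

lemma total_r1:
  assumes "Card_order r" "i \<in> Field r" "j \<in> Field r"
  shows "(i, j) \<in> r \<or> (j, i) \<in> r"
proof -
  have "wo_rel r" using assms(1) by (rule Card_order_wo_rel)
  then show ?thesis using assms wo_rel.TOTALS by blast
qed


definition Q0 :: "'a rel \<Rightarrow> (nat list \<times> 'a) set" where "Q0 r = UNIV \<times> Field r"

context
  fixes r1 :: "'a rel" and r2 :: "'b rel" and fl fu
  assumes co1: "Card_order r1" and ne1: "Field r1 \<noteq> {}" and ne2: "Field r2 \<noteq> {}"
    and pc: "peculiar_cut r1 r2 fl fu"
begin

lemma lower2:
  assumes "i \<in> Field r1" "j \<in> Field r1"
  shows "\<exists>k\<in>Field r1. ev_le (fl k) (fl i) \<and> ev_le (fl k) (fl j)"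
proof -
  have A: "ev_le (fl b) (fl a)" if "(a, b) \<in> r1" "a \<in> Field r1" "b \<in> Field r1" for a b
  proof (cases "a = b")
    case True then show ?thesis by (simp add: ev_le_refl)
  next
    case False then show ?thesis using pc that unfolding peculiar_cut_def by (blast intro: ev_less_le)
  qed
  from total_r1[OF co1 assms] show ?thesis
    using A assms ev_le_refl by blast
qed

lemma lowerF:
  assumes "finite I" "I \<subseteq> Field r1"
  shows "\<exists>k\<in>Field r1. \<forall>i\<in>I. ev_le (fl k) (fl i)"
  using assms
proof (induction I rule: finite_induct)
  case empty then show ?case using ne1 by auto
next
  case (insert x F)
  then obtain k where k: "k \<in> Field r1" "\<forall>i\<in>F. ev_le (fl k) (fl i)" by auto
  obtain k' where "k' \<in> Field r1" "ev_le (fl k') (fl k)" "ev_le (fl k') (fl x)"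
    using lower2[OF k(1), of x] insert.prems by auto
  then show ?case using k ev_le_trans by blast
qed


lemma D0_sub: "D0 (Field r1) fl fu i \<alpha> m \<subseteq> Q0 r1"
  unfolding D0_def Q0_def by auto

lemma D0_dense:
  assumes p: "p \<in> Q0 r1" and i: "i \<in> Field r1" and a: "\<alpha> \<in> Field r2"
  shows "\<exists>q\<in>D0 (Field r1) fl fu i \<alpha> m. le0 fl p q"
proof -
  obtain s j where pj: "p = (s, j)" "j \<in> Field r1" using p unfolding Q0_def by auto
  obtain k where k: "k \<in> Field r1" "ev_le (fl k) (fl i)" "ev_le (fl k) (fl j)"
    using lower2[OF i pj(2)] by auto
  obtain N1 where N1: "\<forall>n\<ge>N1. fl k n \<le> fl i n" using ev_le_E[OF k(2)] by auto
  obtain N1' where N1': "\<forall>n\<ge>N1'. fl k n \<le> fl j n" using ev_le_E[OF k(3)] by auto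
  have "ev_less (fu \<alpha>) (fl k)" using pc k(1) a unfolding peculiar_cut_def by blast
  then obtain N2 where N2: "\<forall>n\<ge>N2. fu \<alpha> n < fl k n" using ev_less_E by blast
  define N where "N = max m (max N1 (max N1' N2))"
  define t where "t = s @ replicate (N - length s) 0"
  have lt: "length t \<ge> N" unfolding t_def by simp
  have 1: "le0 fl (s, j) (t, k)" unfolding t_def
    by (rule le0_ext) (use N1' N_def in auto)
  have 2: "le0 fl (t, k) (t @ [fl k (length t)], k)" by (rule le0_step)
  have "(t @ [fl k (length t)], k) \<in> D0 (Field r1) fl fu i \<alpha> m"
    unfolding D0_def
  proof (clarsimp, intro conjI)
    show "k \<in> Field r1" by (rule k(1))
    show "\<forall>n\<ge>Suc (length t). fl k n \<le> fl i n" using N1 lt N_def by auto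
    show "\<exists>n\<ge>m. n < Suc (length t) \<and> fu \<alpha> n < (t @ [fl k (length t)]) ! n"
      by (rule exI[of _ "length t"]) (use N2 lt N_def in auto)
  qed
  then show ?thesis using le0_trans[OF 1 2] pj by blast
qed


lemma Q0_sigma: "sigma_centered (Q0 r1) (le0 fl)"
  unfolding sigma_centered_def
proof (intro conjI)
  show "forcing_notion (Q0 r1) (le0 fl)" unfolding forcing_notion_def
    using le0_refl le0_trans by blast
  define C where "C n = {p \<in> Q0 r1. to_nat (fst p) = n}" for n
  have "Q0 r1 = (\<Union>n. C n)" unfolding C_def by auto
  moreover have "centered (Q0 r1) (le0 fl) (C n)" for n
    unfolding centered_def
  proof (intro conjI allI impI)
    show "C n \<subseteq> Q0 r1" unfolding C_def by auto
    fix F assume F: "F \<subseteq> C n \<and> finite F"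
    define s :: "nat list" where "s = from_nat n"
    have fs: "fst p = s" if "p \<in> F" for p
      using F that unfolding C_def s_def by (auto simp: from_nat_to_nat[symmetric])
    have I: "finite (snd ` F)" "snd ` F \<subseteq> Field r1" using F unfolding C_def Q0_def by auto
    obtain k where k: "k \<in> Field r1" "\<forall>i\<in>snd ` F. ev_le (fl k) (fl i)"
      using lowerF[OF I] by blast
    have "finite (\<Union>i\<in>snd ` F. {n. \<not> fl k n \<le> fl i n})"
      using I(1) k(2) unfolding ev_le_def by blast
    then obtain N where N: "\<forall>n\<ge>N. n \<notin> (\<Union>i\<in>snd ` F. {n. \<not> fl k n \<le> fl i n})"
      using finite_bound by blast
    have "le0 fl p (s @ replicate (N - length s) 0, k)" if "p \<in> F" for p
    proof -
      have "p = (s, snd p)" using fs[OF that] by (cases p) auto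
      moreover have "\<forall>n\<ge>N. fl k n \<le> fl (snd p) n" using N that by blast
      ultimately show ?thesis using le0_ext by metis
    qed
    moreover have "(s @ replicate (N - length s) 0, k) \<in> Q0 r1" using k unfolding Q0_def by auto
    ultimately show "\<exists>q\<in>Q0 r1. \<forall>p\<in>F. le0 fl p q" by blast
  qed
  ultimately show "\<exists>C :: nat \<Rightarrow> (nat list \<times> 'a) set. Q0 r1 = (\<Union>n. C n) \<and> (\<forall>n. centered (Q0 r1) (le0 fl) (C n))"
    by blast
qed

lemma no_generic:
  assumes G: "G \<subseteq> Q0 r1" and dir: "\<forall>p\<in>G. \<forall>q\<in>G. \<exists>r\<in>G. le0 fl p r \<and> le0 fl q r"
    and meet: "\<forall>i\<in>Field r1. \<forall>\<alpha>\<in>Field r2. \<forall>m. G \<inter> D0 (Field r1) fl fu i \<alpha> m \<noteq> {}"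
  shows False
proof -
  obtain i0 \<alpha>0 where i0: "i0 \<in> Field r1" and a0: "\<alpha>0 \<in> Field r2" using ne1 ne2 by blast
  have compat: "fst p ! n = fst q ! n" if pq: "p \<in> G" "q \<in> G" "n < length (fst p)" "n < length (fst q)" for p q n
  proof -
    obtain r where "r \<in> G" "le0 fl p r" "le0 fl q r" using dir pq(1,2) by meson
    then show ?thesis using pq unfolding le0_def by auto
  qed
  have ex: "\<exists>p. p \<in> G \<and> n < length (fst p)" for n
  proof -
    obtain p where "p \<in> G" "p \<in> D0 (Field r1) fl fu i0 \<alpha>0 n" using meet i0 a0 by blast
    then show ?thesis unfolding D0_def by (cases p) auto
  qed
  define g where "g n = fst (SOME p. p \<in> G \<and> n < length (fst p)) ! n" for n
  have gp: "g n = fst p ! n" if gpp: "p \<in> G" "n < length (fst p)" for p n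
  proof -
    have "(SOME p. p \<in> G \<and> n < length (fst p)) \<in> G \<and> n < length (fst (SOME p. p \<in> G \<and> n < length (fst p)))"
      by (rule someI_ex[OF ex])
    then show ?thesis unfolding g_def using compat gpp by blast
  qed
  have "ev_le g (fl i)" if i: "i \<in> Field r1" for i
  proof -
    obtain p where p: "p \<in> G" "p \<in> D0 (Field r1) fl fu i \<alpha>0 0" using meet i a0 by blast
    obtain t j where tj: "p = (t, j)" by (cases p)
    have "g n \<le> fl i n" if n: "n \<ge> length t" for n
    proof -
      obtain q where q: "q \<in> G" "n < length (fst q)" using ex by blast
      obtain r where r: "r \<in> G" "le0 fl p r" "le0 fl q r" using dir p(1) q(1) by blast
      have nr: "n < length (fst r)" using r(3) q(2) unfolding le0_def by linarith
      have "g n = fst r ! n" using gp r(1) nr by blast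
      also have "\<dots> \<le> fl j n" using r(2) n nr tj unfolding le0_def by auto
      also have "\<dots> \<le> fl i n" using p(2) n tj unfolding D0_def by auto
      finally show ?thesis .
    qed
    then have "{n. \<not> g n \<le> fl i n} \<subseteq> {..<length t}"
      by (metis (mono_tags, lifting) lessThan_iff mem_Collect_eq not_le subsetI)
    then show ?thesis unfolding ev_le_def using finite_subset by blast
  qed
  then obtain \<alpha> where a: "\<alpha> \<in> Field r2" "ev_le g (fu \<alpha>)"
    using pc unfolding peculiar_cut_def by blast
  obtain M where M: "\<forall>n\<ge>M. g n \<le> fu \<alpha> n" using ev_le_E[OF a(2)] by blast
  obtain p where p: "p \<in> G" "p \<in> D0 (Field r1) fl fu i0 \<alpha> M" using meet i0 a(1) by blast
  obtain t j where tj: "p = (t, j)" by (cases p)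
  obtain n where n: "M \<le> n" "n < length t" "fu \<alpha> n < t ! n" using p(2) tj unfolding D0_def by auto
  have "g n = t ! n" using gp[OF p(1)] n tj by auto
  then show False using M n by force
qed
end



definition Abv :: "(nat \<Rightarrow> nat) \<Rightarrow> nat set" where
  "Abv f = {x. snd (prod_decode x) \<le> f (fst (prod_decode x))}"
definition Bel :: "(nat \<Rightarrow> nat) \<Rightarrow> nat set" where
  "Bel f = {x. f (fst (prod_decode x)) < snd (prod_decode x)}"

lemma Abv_enc[simp]: "prod_encode (n, k) \<in> Abv f \<longleftrightarrow> k \<le> f n" unfolding Abv_def by simp
lemma Bel_enc[simp]: "prod_encode (n, k) \<in> Bel f \<longleftrightarrow> f n < k" unfolding Bel_def by simp

definition BB :: "'a rel \<Rightarrow> 'b rel \<Rightarrow> ('a \<Rightarrow> nat \<Rightarrow> nat) \<Rightarrow> ('b \<Rightarrow> nat \<Rightarrow> nat) \<Rightarrow> nat set set" where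
  "BB r1 r2 fl fu = (\<lambda>i. Abv (fl i)) ` Field r1 \<union> (\<lambda>\<alpha>. Bel (fu \<alpha>)) ` Field r2"

context
  fixes r1 :: "'a rel" and r2 :: "'b rel" and fl fu
  assumes ne1: "Field r1 \<noteq> {}"
    and pc: "peculiar_cut r1 r2 fl fu"
begin

lemma sfip_IJ:
  assumes I: "finite I" "I \<subseteq> Field r1" and J: "finite J" "J \<subseteq> Field r2"
  shows "infinite (\<Inter>((\<lambda>i. Abv (fl i)) ` I \<union> (\<lambda>\<alpha>. Bel (fu \<alpha>)) ` J))"
proof -
  have fin: "finite (\<Union>\<alpha>\<in>J. \<Union>i\<in>I. {n. \<not> fu \<alpha> n < fl i n})"
    using I J pc unfolding peculiar_cut_def ev_less_def by (intro finite_UN_I) blast+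
  obtain N where N: "\<forall>n\<ge>N. n \<notin> (\<Union>\<alpha>\<in>J. \<Union>i\<in>I. {n. \<not> fu \<alpha> n < fl i n})"
    using finite_bound[OF fin] by blast
  define k where "k n = (if J = {} then 0 else Suc (Max ((\<lambda>\<alpha>. fu \<alpha> n) ` J)))" for n
  define h where "h n = prod_encode (n, k n)" for n
  have inj: "inj h" unfolding h_def inj_def
    by (metis inj_prod_encode[of UNIV] inj_def prod.inject)
  have A: "h n \<in> Abv (fl i)" if n: "N \<le> n" and i: "i \<in> I" for n i
    proof (cases "J = {}")
      case True then show ?thesis unfolding h_def k_def by simp
    next
      case False
      then have "Max ((\<lambda>\<alpha>. fu \<alpha> n) ` J) \<in> (\<lambda>\<alpha>. fu \<alpha> n) ` J" using J by (intro Max_in) auto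
      then obtain \<alpha> where a: "\<alpha> \<in> J" "Max ((\<lambda>\<alpha>. fu \<alpha> n) ` J) = fu \<alpha> n" by auto
      have "fu \<alpha> n < fl i n" using N n a(1) i by blast
      then show ?thesis unfolding h_def k_def using False a by simp
    qed
  have B: "h n \<in> Bel (fu \<alpha>)" if a: "\<alpha> \<in> J" for n \<alpha>
  proof -
    have "fu \<alpha> n \<le> Max ((\<lambda>\<alpha>. fu \<alpha> n) ` J)" using J a by (intro Max_ge) auto
    then show "h n \<in> Bel (fu \<alpha>)" unfolding h_def k_def using a by auto
  qed
  have sub: "h ` {N..} \<subseteq> \<Inter>((\<lambda>i. Abv (fl i)) ` I \<union> (\<lambda>\<alpha>. Bel (fu \<alpha>)) ` J)"
    using A B by auto
  have "infinite (h ` {N..})" using inj by (simp add: finite_image_iff inj_on_subset infinite_Ici)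
  then show ?thesis using sub finite_subset by blast
qed


lemma BB_sfip: assumes "F \<subseteq> (BB r1 r2 fl fu)" "finite F" shows "infinite (\<Inter>F)"
proof -
  have s1: "F \<inter> (\<lambda>i. Abv (fl i)) ` Field r1 \<subseteq> (\<lambda>i. Abv (fl i)) ` Field r1" by blast
  have f1: "finite (F \<inter> (\<lambda>i. Abv (fl i)) ` Field r1)" using assms(2) by simp
  obtain I where I: "I \<subseteq> Field r1" "finite I" "F \<inter> (\<lambda>i. Abv (fl i)) ` Field r1 = (\<lambda>i. Abv (fl i)) ` I"
    using finite_subset_image[OF f1 s1] by blast
  have s2: "F \<inter> (\<lambda>\<alpha>. Bel (fu \<alpha>)) ` Field r2 \<subseteq> (\<lambda>\<alpha>. Bel (fu \<alpha>)) ` Field r2" by blast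
  have f2: "finite (F \<inter> (\<lambda>\<alpha>. Bel (fu \<alpha>)) ` Field r2)" using assms(2) by simp
  obtain J where J: "J \<subseteq> Field r2" "finite J" "F \<inter> (\<lambda>\<alpha>. Bel (fu \<alpha>)) ` Field r2 = (\<lambda>\<alpha>. Bel (fu \<alpha>)) ` J"
    using finite_subset_image[OF f2 s2] by blast
  have "F = (F \<inter> (\<lambda>i. Abv (fl i)) ` Field r1) \<union> (F \<inter> (\<lambda>\<alpha>. Bel (fu \<alpha>)) ` Field r2)"
    using assms(1) unfolding BB_def by (metis Int_Un_distrib Int_absorb2)
  then have "F = (\<lambda>i. Abv (fl i)) ` I \<union> (\<lambda>\<alpha>. Bel (fu \<alpha>)) ` J" using I(3) J(3) by simp
  then show ?thesis using sfip_IJ[OF I(2,1) J(2,1)] by simp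
qed

lemma BB_pfam: "p_family (BB r1 r2 fl fu)"
  unfolding p_family_def
proof (intro conjI)
  show "\<forall>X\<in>(BB r1 r2 fl fu). infinite X" using BB_sfip[of "{X}" for X] by simp
next
  show "\<forall>F. F \<subseteq> (BB r1 r2 fl fu) \<and> finite F \<longrightarrow> infinite (\<Inter>F)" using BB_sfip by blast
next
  show "\<not> (\<exists>A. infinite A \<and> (\<forall>X\<in>(BB r1 r2 fl fu). finite (A - X)))"
  proof
  assume "\<exists>A. infinite A \<and> (\<forall>X\<in>(BB r1 r2 fl fu). finite (A - X))"
  then obtain Y where Y: "infinite Y" "\<forall>X\<in>(BB r1 r2 fl fu). finite (Y - X)" by blast
  obtain i0 where i0: "i0 \<in> Field r1" using ne1 by blast
  define col where "col n = {k. prod_encode (n, k) \<in> Y}" for n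
  have injn: "inj (\<lambda>k. prod_encode (n, k))" for n
    unfolding inj_def by (metis inj_prod_encode[of UNIV] inj_def prod.inject)
  have fincol: "finite (col n)" for n
  proof -
    have "finite (Y - Abv (fl i0))" using Y(2) i0 unfolding BB_def by blast
    then have "finite ((\<lambda>k. prod_encode (n, k)) -` (Y - Abv (fl i0)))" using injn by (rule finite_vimageI)
    moreover have "col n \<subseteq> {..fl i0 n} \<union> (\<lambda>k. prod_encode (n, k)) -` (Y - Abv (fl i0))"
      unfolding col_def by auto
    ultimately show ?thesis using finite_subset by blast
  qed
  define g where "g n = Max (insert 0 (col n))" for n
  have gin: "g n \<noteq> 0 \<Longrightarrow> g n \<in> col n" for n
    using Max_in[of "insert 0 (col n)"] fincol unfolding g_def by auto
  have gge: "k \<in> col n \<Longrightarrow> k \<le> g n" for k n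
    using fincol unfolding g_def by simp
  have "ev_le g (fl i)" if i: "i \<in> Field r1" for i
  proof -
    have fin: "finite (Y - Abv (fl i))" using Y(2) i unfolding BB_def by blast
    have "{n. \<not> g n \<le> fl i n} \<subseteq> (\<lambda>x. fst (prod_decode x)) ` (Y - Abv (fl i))"
    proof
      fix n assume "n \<in> {n. \<not> g n \<le> fl i n}"
      then have n: "fl i n < g n" by simp
      then have "g n \<in> col n" using gin by simp
      then have "prod_encode (n, g n) \<in> Y - Abv (fl i)" using n unfolding col_def by simp
      then show "n \<in> (\<lambda>x. fst (prod_decode x)) ` (Y - Abv (fl i))"
        by (metis fst_conv image_eqI prod_encode_inverse)
    qed
    then show ?thesis unfolding ev_le_def using fin finite_subset by blast
  qed
  then obtain \<alpha> where a: "\<alpha> \<in> Field r2" "ev_le g (fu \<alpha>)"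
    using pc unfolding peculiar_cut_def by blast
  define S where "S = {n. \<not> g n \<le> fu \<alpha> n}"
  have finS: "finite S" using a(2) unfolding S_def ev_le_def .
  have "Y \<inter> Bel (fu \<alpha>) \<subseteq> prod_encode ` Sigma S col"
  proof
    fix x assume x: "x \<in> Y \<inter> Bel (fu \<alpha>)"
    obtain n k where nk: "prod_decode x = (n, k)" by (cases "prod_decode x")
    have xe: "x = prod_encode (n, k)" by (metis nk prod_decode_inverse)
    have "k \<in> col n" using x xe unfolding col_def by simp
    moreover have "fu \<alpha> n < k" using x xe by simp
    moreover have "k \<le> g n" using gge \<open>k \<in> col n\<close> by blast
    ultimately have "n \<in> S" unfolding S_def by simp
    then show "x \<in> prod_encode ` Sigma S col" using \<open>k \<in> col n\<close> xe by blast
  qed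
  moreover have "finite (prod_encode ` Sigma S col)" using finS fincol by auto
  ultimately have "finite (Y \<inter> Bel (fu \<alpha>))" using finite_subset by blast
  moreover have "finite (Y - Bel (fu \<alpha>))" using Y(2) a(1) unfolding BB_def by blast
  ultimately have "finite Y" by (metis Int_Diff_Un finite_Un)
  then show False using Y(1) by blast
  qed
qed

end

lemma transfer_sc:
  assumes bij: "bij_betw e P0 Q" and sc: "sigma_centered P0 lr"
  shows "sigma_centered Q (\<lambda>p q. lr (inv_into P0 e p) (inv_into P0 e q))"
proof -
  define d where "d = inv_into P0 e"
  have de: "x \<in> P0 \<Longrightarrow> d (e x) = x" for x using bij unfolding d_def bij_betw_def by simp
  have ed: "p \<in> Q \<Longrightarrow> e (d p) = p" for p using bij unfolding d_def bij_betw_def by (simp add: f_inv_into_f)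
  have dQ: "p \<in> Q \<Longrightarrow> d p \<in> P0" for p using bij unfolding d_def bij_betw_def by (metis inv_into_into)
  have eQ: "x \<in> P0 \<Longrightarrow> e x \<in> Q" for x using bij unfolding bij_betw_def by blast
  have fn: "forcing_notion P0 lr" using sc unfolding sigma_centered_def by simp
  have "\<exists>C :: nat \<Rightarrow> _. P0 = (\<Union>n. C n) \<and> (\<forall>n. centered P0 lr (C n))"
    using sc unfolding sigma_centered_def by (rule conjunct2)
  then obtain C :: "nat \<Rightarrow> _" where C: "P0 = (\<Union>n. C n)" "\<forall>n. centered P0 lr (C n)" by blast
  have "forcing_notion Q (\<lambda>p q. lr (d p) (d q))"
    using fn dQ unfolding forcing_notion_def by blast
  moreover have "Q = (\<Union>n. e ` C n)" using C(1) bij unfolding bij_betw_def by blast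
  moreover have "centered Q (\<lambda>p q. lr (d p) (d q)) (e ` C n)" for n
    unfolding centered_def
  proof (intro conjI allI impI)
    show "e ` C n \<subseteq> Q" using C eQ by blast
    fix F assume F: "F \<subseteq> e ` C n \<and> finite F"
    have "d ` F \<subseteq> C n"
    proof
      fix x assume "x \<in> d ` F"
      then obtain p where p: "p \<in> F" "x = d p" by blast
      then obtain y where y: "y \<in> C n" "p = e y" using F by blast
      have "y \<in> P0" using y(1) C(1) by blast
      then show "x \<in> C n" using de p y by simp
    qed
    moreover have "finite (d ` F)" using F by blast
    moreover have cen: "\<forall>F. F \<subseteq> C n \<and> finite F \<longrightarrow> (\<exists>q\<in>P0. \<forall>p\<in>F. lr p q)"
      using C(2)[rule_format, of n] unfolding centered_def by (rule conjunct2)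
    ultimately have "\<exists>q\<in>P0. \<forall>x\<in>d ` F. lr x q" by (meson)
    then obtain q0 where q0: "q0 \<in> P0" "\<forall>x\<in>d ` F. lr x q0" by blast
    have "e q0 \<in> Q" "d (e q0) = q0" using q0 eQ de by auto
    then show "\<exists>q\<in>Q. \<forall>p\<in>F. lr (d p) (d q)" using q0(2) by force
  qed
  ultimately show ?thesis unfolding sigma_centered_def d_def by blast
qed

lemma transfer_od:
  assumes bij: "bij_betw e P0 Q" and od: "open_dense_in P0 lr D"
  shows "open_dense_in Q (\<lambda>p q. lr (inv_into P0 e p) (inv_into P0 e q)) (e ` D)"
proof -
  define d where "d = inv_into P0 e"
  have de: "x \<in> P0 \<Longrightarrow> d (e x) = x" for x using bij unfolding d_def bij_betw_def by simp
  have dQ: "p \<in> Q \<Longrightarrow> d p \<in> P0" for p using bij unfolding d_def bij_betw_def by (metis inv_into_into)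
  have eQ: "x \<in> P0 \<Longrightarrow> e x \<in> Q" for x using bij unfolding bij_betw_def by blast
  have ed: "p \<in> Q \<Longrightarrow> e (d p) = p" for p using bij unfolding d_def bij_betw_def by (simp add: f_inv_into_f)
  have DQ: "D \<subseteq> P0" using od unfolding open_dense_in_def dense_in_def by blast
  have "open_dense_in Q (\<lambda>p q. lr (d p) (d q)) (e ` D)"
    unfolding open_dense_in_def dense_in_def
  proof (intro conjI ballI)
    show "e ` D \<subseteq> Q" using DQ eQ by blast
  next
    fix p assume p: "p \<in> Q"
    then obtain q where "q \<in> D" "lr (d p) q" using dQ od unfolding open_dense_in_def dense_in_def by blast
    then show "\<exists>q\<in>e ` D. lr (d p) (d q)" using DQ de by force
  next
    fix p q assume p: "p \<in> e ` D" and q: "q \<in> Q"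
    show "lr (d p) (d q) \<longrightarrow> q \<in> e ` D"
    proof
      assume "lr (d p) (d q)"
      moreover have "d p \<in> D" using p DQ de by force
      ultimately have "d q \<in> D" using od dQ q unfolding open_dense_in_def by blast
      then show "q \<in> e ` D" using ed q by force
    qed
  qed
  then show ?thesis unfolding d_def .
qed




theorem proposition3p1:
  fixes r1 :: "'a rel" and r2 :: "'b rel"
  assumes "inf_regular_card r1" and "inf_regular_card r2"
    and "(r1, r2) \<in> ordLeq"
    and "\<exists>fl fu. peculiar_cut r1 r2 fl fu"
  shows "(\<exists>(Q :: 'a set) le (D :: 'b \<Rightarrow> 'a set).
            sigma_centered Q le \<and> (card_of Q, r1) \<in> ordIso \<and>
            (\<forall>\<alpha>\<in>Field r2. open_dense_in Q le (D \<alpha>)) \<and>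
            \<not> (\<exists>G. directed_in Q le G \<and> (\<forall>\<alpha>\<in>Field r2. G \<inter> D \<alpha> \<noteq> {})))
       \<and> \<not> MA_sigma_centered r2 TYPE('a)
       \<and> (\<exists>B. p_family B \<and> (card_of B, r2) \<in> ordLeq)"
proof -
  from assms(4) obtain fl fu where pc: "peculiar_cut r1 r2 fl fu" by blast
  have co1: "Card_order r1" and inf1: "infinite (Field r1)" using assms(1) unfolding inf_regular_card_def by auto
  have co2: "Card_order r2" and inf2: "infinite (Field r2)" using assms(2) unfolding inf_regular_card_def by auto
  have ne1: "Field r1 \<noteq> {}" using inf1 by auto
  have ne2: "Field r2 \<noteq> {}" using inf2 by auto
  have nat1: "(card_of (UNIV::nat set), card_of (Field r1)) \<in> ordLeq" using inf1 infinite_iff_card_of_nat by blast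
  have nat2: "(card_of (UNIV::nat set), card_of (Field r2)) \<in> ordLeq" using inf2 infinite_iff_card_of_nat by blast
  have ll: "(card_of (UNIV :: nat list set), card_of (UNIV :: nat set)) \<in> ordLeq"
    unfolding card_of_ordLeq[symmetric] by (rule exI[of _ to_nat]) simp
  have "(card_of (UNIV :: nat list set), card_of (Field r1)) \<in> ordLeq" by (rule ordLeq_transitive[OF ll nat1])
  then have "(card_of ((UNIV::nat list set) \<times> Field r1), card_of (Field r1)) \<in> ordIso"
    using card_of_Times_infinite[OF inf1, of "UNIV :: nat list set"] by simp
  then have "\<exists>e. bij_betw e ((UNIV::nat list set) \<times> Field r1) (Field r1)" by (simp only: card_of_ordIso)
  then obtain e where bij: "bij_betw e (Q0 r1) (Field r1)" unfolding Q0_def by (elim exE)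
  define d where "d = inv_into (Q0 r1) e"
  define le where "le = (\<lambda>p q. le0 fl (d p) (d q))"
  have F12: "(card_of (Field r1), card_of (Field r2)) \<in> ordLeq"
    using ordIso_ordLeq_trans[OF card_of_Field_ordIso[OF co1] ordLeq_ordIso_trans[OF assms(3) ordIso_symmetric[OF card_of_Field_ordIso[OF co2]]]] .
  define A where "A = Field r2 \<times> (UNIV :: nat set)"
  have AF2: "(card_of A, card_of (Field r2)) \<in> ordIso"
    using card_of_Times_infinite[OF inf2, of "UNIV::nat set"] nat2 unfolding A_def by simp
  have infA: "infinite A"
  proof
    assume "finite A"
    then have "finite (Field r2)" using finite_cartesian_productD1[of "Field r2" "UNIV::nat set"] unfolding A_def by simp
    with inf2 show False by simp
  qed
  have neA: "A \<noteq> {}" using infA by auto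
  have "(card_of (Field r1), card_of A) \<in> ordLeq" by (rule ordLeq_ordIso_trans[OF F12 ordIso_symmetric[OF AF2]])
  then have "(card_of (Field r1 \<times> A), card_of A) \<in> ordIso" using card_of_Times_infinite[OF infA ne1] by simp
  then have "(card_of (Field r1 \<times> A), card_of (Field r2)) \<in> ordLeq"
    using ordIso_imp_ordLeq ordIso_transitive AF2 by blast
  then obtain \<rho> where rho: "\<rho> ` Field r2 = Field r1 \<times> A"
    using card_of_ordLeq2[of "Field r1 \<times> A" "Field r2"] ne1 neA by auto
  define D where "D \<beta> = e ` D0 (Field r1) fl fu (fst (\<rho> \<beta>)) (fst (snd (\<rho> \<beta>))) (snd (snd (\<rho> \<beta>)))" for \<beta>
  have sc: "sigma_centered (Field r1) le"
    unfolding le_def d_def by (rule transfer_sc[OF bij Q0_sigma[OF co1 ne1 ne2 pc]])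
  have od0: "open_dense_in (Q0 r1) (le0 fl) (D0 (Field r1) fl fu i \<alpha> m)" if "i \<in> Field r1" "\<alpha> \<in> Field r2" for i \<alpha> m
    unfolding open_dense_in_def dense_in_def
  proof (intro conjI ballI impI)
    show "D0 (Field r1) fl fu i \<alpha> m \<subseteq> Q0 r1" by (rule D0_sub[OF co1 ne1 ne2 pc])
  next
    fix p assume "p \<in> Q0 r1"
    then show "\<exists>q\<in>D0 (Field r1) fl fu i \<alpha> m. le0 fl p q" by (rule D0_dense[OF co1 ne1 ne2 pc _ that])
  next
    fix p q assume "p \<in> D0 (Field r1) fl fu i \<alpha> m" "q \<in> Q0 r1" "le0 fl p q"
    then show "q \<in> D0 (Field r1) fl fu i \<alpha> m" using D0_open[of p _ fl fu i \<alpha> m q] unfolding Q0_def by auto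
  qed
  have od: "\<forall>\<beta>\<in>Field r2. open_dense_in (Field r1) le (D \<beta>)"
  proof
    fix \<beta> assume "\<beta> \<in> Field r2"
    then have "\<rho> \<beta> \<in> Field r1 \<times> A" using rho by blast
    then have "open_dense_in (Q0 r1) (le0 fl) (D0 (Field r1) fl fu (fst (\<rho> \<beta>)) (fst (snd (\<rho> \<beta>))) (snd (snd (\<rho> \<beta>))))"
      using od0 unfolding A_def by auto
    then show "open_dense_in (Field r1) le (D \<beta>)" unfolding le_def d_def D_def by (rule transfer_od[OF bij])
  qed
  have nog: "\<not> (\<exists>G. directed_in (Field r1) le G \<and> (\<forall>\<beta>\<in>Field r2. G \<inter> D \<beta> \<noteq> {}))"
  proof
    assume "\<exists>G. directed_in (Field r1) le G \<and> (\<forall>\<beta>\<in>Field r2. G \<inter> D \<beta> \<noteq> {})"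
    then obtain G where G: "directed_in (Field r1) le G" "\<forall>\<beta>\<in>Field r2. G \<inter> D \<beta> \<noteq> {}" by blast
    have de: "x \<in> Q0 r1 \<Longrightarrow> d (e x) = x" for x using bij unfolding d_def bij_betw_def by simp
    have dQ: "p \<in> Field r1 \<Longrightarrow> d p \<in> Q0 r1" for p using bij unfolding d_def bij_betw_def by (metis inv_into_into)
    have GQ: "G \<subseteq> Field r1" using G(1) unfolding directed_in_def by blast
    have 1: "d ` G \<subseteq> Q0 r1" using GQ dQ by blast
    have 2: "\<forall>p\<in>d ` G. \<forall>q\<in>d ` G. \<exists>r\<in>d ` G. le0 fl p r \<and> le0 fl q r"
      using G(1) unfolding directed_in_def le_def by blast
    have 3: "\<forall>i\<in>Field r1. \<forall>\<alpha>\<in>Field r2. \<forall>m. d ` G \<inter> D0 (Field r1) fl fu i \<alpha> m \<noteq> {}"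
    proof (intro ballI allI)
      fix i \<alpha> m assume i: "i \<in> Field r1" and a: "\<alpha> \<in> Field r2"
      have "(i, \<alpha>, m) \<in> \<rho> ` Field r2" using rho i a unfolding A_def by auto
      then obtain \<beta> where b: "\<beta> \<in> Field r2" "\<rho> \<beta> = (i, \<alpha>, m)" by auto
      then obtain x where x: "x \<in> G" "x \<in> D \<beta>" using G(2) by blast
      then obtain y where y: "y \<in> D0 (Field r1) fl fu i \<alpha> m" "x = e y" unfolding D_def using b by auto
      have "y \<in> Q0 r1" using y(1) D0_sub[OF co1 ne1 ne2 pc] by blast
      then have "d x = y" using de y by simp
      then show "d ` G \<inter> D0 (Field r1) fl fu i \<alpha> m \<noteq> {}" using x y by blast
    qed
    show False by (rule no_generic[OF co1 ne1 ne2 pc 1 2 3])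
  qed
  have card: "(card_of (Field r1), r1) \<in> ordIso" by (rule card_of_Field_ordIso[OF co1])
  have part1: "\<exists>(Q :: 'a set) le (D :: 'b \<Rightarrow> 'a set).
            sigma_centered Q le \<and> (card_of Q, r1) \<in> ordIso \<and>
            (\<forall>\<alpha>\<in>Field r2. open_dense_in Q le (D \<alpha>)) \<and>
            \<not> (\<exists>G. directed_in Q le G \<and> (\<forall>\<alpha>\<in>Field r2. G \<inter> D \<alpha> \<noteq> {}))"
    using sc card od nog by blast
  have part2: "\<not> MA_sigma_centered r2 TYPE('a)"
  proof
    assume "MA_sigma_centered r2 TYPE('a)"
    moreover have "\<forall>\<beta>\<in>Field r2. dense_in (Field r1) le (D \<beta>)" using od unfolding open_dense_in_def by blast
    ultimately have "\<exists>G. directed_in (Field r1) le G \<and> (\<forall>\<beta>\<in>Field r2. G \<inter> D \<beta> \<noteq> {})"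
      using sc unfolding MA_sigma_centered_def by blast
    then show False using nog by blast
  qed
  have pf: "p_family (BB r1 r2 fl fu)" by (rule BB_pfam[OF ne1 pc])
  have c1: "(card_of ((\<lambda>i. Abv (fl i)) ` Field r1), r2) \<in> ordLeq"
    using ordLeq_transitive[OF card_of_image ordIso_ordLeq_trans[OF card_of_Field_ordIso[OF co1] assms(3)]] .
  have c2: "(card_of ((\<lambda>\<alpha>. Bel (fu \<alpha>)) ` Field r2), r2) \<in> ordLeq"
    using ordLeq_ordIso_trans[OF card_of_image card_of_Field_ordIso[OF co2]] .
  have BBe: "BB r1 r2 fl fu = (\<lambda>i. Abv (fl i)) ` Field r1 \<union> (\<lambda>\<alpha>. Bel (fu \<alpha>)) ` Field r2"
    by (simp add: BB_def)
  have "(card_of (BB r1 r2 fl fu), r2) \<in> ordLeq"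
    unfolding BBe by (rule card_of_Un_ordLeq_infinite_Field[OF inf2 c1 c2 co2])
  then show ?thesis using part1 part2 pf by blast
qed

end
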